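(* Let $b>3$ be a strongly symmetric base. Then $b+1$ is prime.
   Context: Let $b>2$ be an integer base and write $(d_k,d_{k-1},\ldots,d_0)_b=\sum_{j=0}^k d_j b^j$ with $0\le d_j<b$. A natural number $p=(d_k,\ldots,d_0)_b$ with $d_k\neq 0$ and $d_0\neq 0$ that is not a base-$b$ palindrome is an $(n,b)$-palintiple if $(d_k,\ldots,d_0)_b=n\,(d_0,d_1,\ldots,d_k)_b$ for an integer $n$ with $1<n<b$; a base-$b$ palintiple is an $(n,b)$-palintiple for some such $n$. Its carries $c_0,\ldots,c_{k+1}$ are the carries arising in the base-$b$ multiplication of $(d_0,\ldots,d_k)_b$ by $n$: $c_0=0$ and $n d_{k-j}+c_j=d_j+b\,c_{j+1}$ for $0\le j\le k$ (so $c_{k+1}=0$). The palintiple is symmetric if $c_j=c_{k-j}$ for all $0\le j\le k$. A base $b$ is strongly symmetric if every base-$b$ palintiple (for every $n$ with $1<n<b$) is symmetric. *)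

theory Defs
  imports "HOL-Computational_Algebra.Primes"
begin

text \<open>A base-b digit string of length k+1 is a function d :: nat => nat,
  where d j is the coefficient of b^j for j <= k.\<close>

definition digval :: "nat \<Rightarrow> nat \<Rightarrow> (nat \<Rightarrow> nat) \<Rightarrow> nat" where
  "digval b k d = (\<Sum>j\<le>k. d j * b ^ j)"

definition is_palintiple :: "nat \<Rightarrow> nat \<Rightarrow> nat \<Rightarrow> (nat \<Rightarrow> nat) \<Rightarrow> bool" where
  "is_palintiple n b k d \<longleftrightarrow>
     1 < n \<and> n < b \<and>
     (\<forall>j\<le>k. d j < b) \<and> d k \<noteq> 0 \<and> d 0 \<noteq> 0 \<and>
     \<not> (\<forall>j\<le>k. d j = d (k - j)) \<and>
     digval b k d = n * digval b k (\<lambda>j. d (k - j))"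

text \<open>Carries of the base-b multiplication of (d_0,...,d_k)_b by n:
  c_0 = 0 and n d_{k-j} + c_j = d_j + b c_{j+1}; for a palintiple these
  are uniquely determined, c_{j+1} = (n d_{k-j} + c_j) div b.\<close>

fun carry :: "nat \<Rightarrow> nat \<Rightarrow> nat \<Rightarrow> (nat \<Rightarrow> nat) \<Rightarrow> nat \<Rightarrow> nat" where
  "carry n b k d 0 = 0"
| "carry n b k d (Suc j) = (n * d (k - j) + carry n b k d j) div b"

definition symmetric_palintiple :: "nat \<Rightarrow> nat \<Rightarrow> nat \<Rightarrow> (nat \<Rightarrow> nat) \<Rightarrow> bool" where
  "symmetric_palintiple n b k d \<longleftrightarrow>
     (\<forall>j\<le>k. carry n b k d j = carry n b k d (k - j))"

definition strongly_symmetric :: "nat \<Rightarrow> bool" where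
  "strongly_symmetric b \<longleftrightarrow>
     (\<forall>n k d. is_palintiple n b k d \<longrightarrow> symmetric_palintiple n b k d)"

end

theory Submission
  imports Defs
begin
lemma eqL: "s + (n*s+k)*(n*s+n+s) = n*((n*s+k) + s*(n*s+n+s))" if "n = Suc k" for n s k :: nat
  using that by (simp add: algebra_simps)
lemma geL: "n * (n*s+k) \<ge> (n*s+n+s)" if "n = Suc (Suc m)" "k = Suc m" "s = Suc r" for n s k m r :: nat
  using that by (simp add: algebra_simps)

lemma not_ss:
  fixes n b s :: nat
  assumes n: "n = Suc (Suc m)" and s: "s = Suc r" and bb: "b = n*s + n + s"
  shows "\<not> strongly_symmetric b"
proof
  assume ss: "strongly_symmetric b"
  define d where "d = (\<lambda>j::nat. if j = 0 then s else n*s + Suc m)"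
  have d0: "d 0 = s" and d1: "d 1 = n*s+Suc m" by (auto simp: d_def)
  have eq: "s + (n*s+Suc m)*b = n*((n*s+Suc m) + s*b)"
    unfolding bb by (rule eqL) (simp add: n)
  have sb: "s < b" using bb n by simp
  have d1b: "n*s+Suc m < b" using bb n s by simp
  have sum: "(\<Sum>j\<le>(1::nat). f j) = f 0 + f 1" for f :: "nat \<Rightarrow> nat"
    by (simp add: atMost_Suc)
  have "is_palintiple n b 1 d"
    unfolding is_palintiple_def digval_def sum
  proof (intro conjI)
    show "\<forall>j\<le>1. d j < b" using d0 d1 sb d1b by (auto simp: le_Suc_eq)
    show "\<not> (\<forall>j\<le>1. d j = d (1 - j))"
    proof
      assume "\<forall>j\<le>1. d j = d (1 - j)"
      hence "d 0 = d 1" by (drule_tac x=0 in spec) simp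
      thus False using d0 d1 n by simp
    qed
    show "d 0 * b ^ 0 + d 1 * b ^ 1 = n * (d (1 - 0) * b ^ 0 + d (1 - 1) * b ^ 1)"
      unfolding d0 d1 diff_self_eq_0 diff_zero power_0 power_one_right mult_1_right
      using eq by (simp only: ac_simps)
      show "1 < n" using n by simp
    show "n < b" using n bb s by simp
    show "d 1 \<noteq> 0" using d1 by simp
    show "d 0 \<noteq> 0" using d0 s by simp
  qed
  then have "symmetric_palintiple n b 1 d" using ss strongly_symmetric_def by blast
  then have "carry n b 1 d 1 = carry n b 1 d 0"
    unfolding symmetric_palintiple_def by (drule_tac x=1 in spec) simp
  then have "n * d 1 div b = 0" by simp
  then have "n * d 1 < b" using sb by (simp add: div_eq_0_iff)
  moreover have "n * d 1 \<ge> b" unfolding d1 bb by (rule geL[OF n refl s])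
  ultimately show False by simp
qed
theorem theorem2:
  fixes b :: nat
  assumes "b > 3" and "strongly_symmetric b"
  shows "prime (b + 1)"
proof (rule ccontr)
  assume np: "\<not> prime (b + 1)"
  then obtain m where m: "m dvd b+1" "m \<noteq> 1" "m \<noteq> b+1"
    using assms(1) prime_nat_iff by auto
  then obtain t where t: "b+1 = m*t" by blast
  have m1: "m > 1" using m t by (cases m) auto
  have t1: "t > 1" using m t by (cases t) auto
  define M where "M = max m t"
  define T where "T = min m t"
  have MT: "b+1 = M*T" unfolding M_def T_def using t by (simp add: max_def min_def)
  have T2: "T \<ge> 2" using m1 t1 unfolding T_def by simp
  have M3: "M \<ge> 3"
  proof (rule ccontr)
    assume "\<not> M \<ge> 3"
    hence "M \<le> 2" by simp
    moreover have "T \<le> M" unfolding T_def M_def by simp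
    ultimately have "M*T \<le> 2*2" by (intro mult_mono) auto
    with MT assms(1) show False by simp
  qed
  define mm where "mm = M - 3"
  have mm: "M = Suc (Suc (Suc mm))" using M3 unfolding mm_def by simp
  define r where "r = T - 2"
  have r: "T = Suc (Suc r)" using T2 unfolding r_def by simp
  have "b = (Suc (Suc mm))*(Suc r) + Suc (Suc mm) + Suc r"
    using MT mm r by (simp add: algebra_simps)
  from not_ss[OF refl refl this] assms(2) show False by simp
qed

end
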